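(* For every $\epsilon>0$ there exists $n_0\ge1$ such that for every composition $\lambda$ of $n$ and every valley $v$ of $\lambda$ whose slope $\mathfrak{s}(v)=[a,b]$ satisfies $b-a\ge n_0$, $$(1-\epsilon)\frac{b-a}{n}\le\mathbb{P}_\lambda(1\in v)\le(1+\epsilon)\frac{b-a}{n}.$$
   Context: A composition $\lambda$ of $n$ is encoded by its descent set $D_\lambda\subset[1,n-1]$. A cell $i\in[1,n]$ is a peak if $i\in D_\lambda\cup\{n\}$ and $i-1\notin D_\lambda$, a valley if $i\notin D_\lambda$ and $i-1\in D_\lambda\cup\{0\}$. The slope $\mathfrak{s}(i)$ of a cell $i$ is the maximal integer subinterval of $[1,n]$ containing $i$ and no peak or valley other than $i$. $\mathbb{P}_\lambda(1\in v)$ is the probability that $\sigma(v)=1$ for $\sigma$ uniform on $\{\sigma\in\mathfrak{S}_n: des(\sigma)=D_\lambda\}$, $des(\sigma)=\{i:\sigma(i+1)<\sigma(i)\}$. *)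

theory Defs
  imports Complex_Main "HOL-Combinatorics.Permutations"
begin

text \<open>A composition of n is encoded by its descent set D, a subset of {1..<n}.
  Cells are 1..n.\<close>

definition is_peak :: "nat \<Rightarrow> nat set \<Rightarrow> nat \<Rightarrow> bool" where
  "is_peak n D i \<longleftrightarrow> i \<in> {1..n} \<and> i \<in> D \<union> {n} \<and> (i - 1) \<notin> D"

definition is_valley :: "nat \<Rightarrow> nat set \<Rightarrow> nat \<Rightarrow> bool" where
  "is_valley n D i \<longleftrightarrow> i \<in> {1..n} \<and> i \<notin> D \<and> (i - 1) \<in> D \<union> {0}"

definition slope_cand :: "nat \<Rightarrow> nat set \<Rightarrow> nat \<Rightarrow> nat \<Rightarrow> nat \<Rightarrow> bool" where
  "slope_cand n D i a b \<longleftrightarrow> 1 \<le> a \<and> a \<le> i \<and> i \<le> b \<and> b \<le> n \<and>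
     (\<forall>j\<in>{a..b}. (is_peak n D j \<or> is_valley n D j) \<longrightarrow> j = i)"

definition is_slope :: "nat \<Rightarrow> nat set \<Rightarrow> nat \<Rightarrow> nat \<Rightarrow> nat \<Rightarrow> bool" where
  "is_slope n D i a b \<longleftrightarrow> slope_cand n D i a b \<and>
     (\<forall>a' b'. slope_cand n D i a' b' \<longrightarrow> {a'..b'} \<subseteq> {a..b})"

definition des :: "nat \<Rightarrow> (nat \<Rightarrow> nat) \<Rightarrow> nat set" where
  "des n \<sigma> = {i \<in> {1..<n}. \<sigma> (Suc i) < \<sigma> i}"

definition perms_with_des :: "nat \<Rightarrow> nat set \<Rightarrow> (nat \<Rightarrow> nat) set" where
  "perms_with_des n D = {\<sigma>. \<sigma> permutes {1..n} \<and> des n \<sigma> = D}"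

definition prob_one_at :: "nat \<Rightarrow> nat set \<Rightarrow> nat \<Rightarrow> real" where
  "prob_one_at n D v = real (card {\<sigma> \<in> perms_with_des n D. \<sigma> v = 1}) / real (card (perms_with_des n D))"

end

theory Submission
  imports Defs
begin



definition rot :: "nat \<Rightarrow> nat \<Rightarrow> nat \<Rightarrow> nat" where
  "rot p j i = (if i = p then j else if j \<le> i \<and> i < p then Suc i else if p < i \<and> i \<le> j then i - 1 else i)"

definition irot :: "nat \<Rightarrow> nat \<Rightarrow> nat \<Rightarrow> nat" where
  "irot p j i = (if i = j then p else if j < i \<and> i \<le> p then i - 1 else if p \<le> i \<and> i < j then Suc i else i)"

lemma irot_rot[simp]: "irot p j (rot p j i) = i"
  unfolding rot_def irot_def by auto

lemma rot_irot[simp]: "rot p j (irot p j i) = i"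
  unfolding rot_def irot_def by auto

lemma rot_permutes:
  assumes "p \<in> {1..n}" "j \<in> {1..n}"
  shows "rot p j permutes {1..n}"
  unfolding permutes_def
proof (intro conjI allI impI)
  fix x assume "x \<notin> {1..n}" thus "rot p j x = x" using assms unfolding rot_def by auto
next
  fix y show "\<exists>!x. rot p j x = y"
    by (rule ex1I[of _ "irot p j y"]) (simp, metis irot_rot)
qed

lemma irot_permutes:
  assumes "p \<in> {1..n}" "j \<in> {1..n}"
  shows "irot p j permutes {1..n}"
  unfolding permutes_def
proof (intro conjI allI impI)
  fix x assume "x \<notin> {1..n}" thus "irot p j x = x" using assms unfolding irot_def by auto
next
  fix y show "\<exists>!x. irot p j x = y"
    by (rule ex1I[of _ "rot p j y"]) (simp, metis rot_irot)
qed

lemma rot_same[simp]: "rot p p = id"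
  unfolding rot_def by auto

lemma irot_same[simp]: "irot p p = id"
  unfolding irot_def by auto

lemma exists_first:
  fixes k m :: nat
  assumes "P m" "k \<le> m"
  shows "\<exists>j. k \<le> j \<and> j \<le> m \<and> P j \<and> (k < j \<longrightarrow> \<not> P (j - 1))"
  using assms(2)
proof (induction k rule: inc_induct)
  case base
  then show ?case using assms(1) by auto
next
  case (step q)
  show ?case
  proof (cases "P q")
    case True thus ?thesis using step by auto
  next
    case False
    from step.IH obtain j where j: "Suc q \<le> j" "j \<le> m" "P j" "Suc q < j \<longrightarrow> \<not> P (j - 1)"
      by auto
    show ?thesis using j False
      by (intro exI[of _ j]) (auto simp: le_eq_less_or_eq)
  qed
qed

lemma exists_last:
  fixes k m :: nat
  assumes "P k" "k \<le> m"
  shows "\<exists>j. k \<le> j \<and> j \<le> m \<and> P j \<and> (j < m \<longrightarrow> \<not> P (Suc j))"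
  using assms(2)
proof (induction m rule: dec_induct)
  case base
  then show ?case using assms(1) by auto
next
  case (step q)
  show ?case
  proof (cases "P (Suc q)")
    case False thus ?thesis using step by auto
  next
    case True
    from step.IH obtain j where j: "k \<le> j" "j \<le> q" "P j" "j < q \<longrightarrow> \<not> P (Suc j)"
      by auto
    show ?thesis
    proof (cases "j = q")
      case True thus ?thesis using \<open>P (Suc q)\<close> step by (intro exI[of _ "Suc q"]) auto
    next
      case False thus ?thesis using j by (intro exI[of _ j]) auto
    qed
  qed
qed

lemma strict_dec_chain:
  assumes "\<And>i. p \<le> i \<Longrightarrow> i < q \<Longrightarrow> f (Suc i) < (f i :: nat)" "p \<le> x" "x < y" "y \<le> q"
  shows "f y < f x"
  using assms(3,4)
proof (induction y)
  case 0 then show ?case by simp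
next
  case (Suc y)
  show ?case
  proof (cases "x = y")
    case True thus ?thesis using assms(1,2) Suc by auto
  next
    case False
    hence "f y < f x" using Suc by auto
    moreover have "f (Suc y) < f y" using assms(1,2) Suc False by auto
    ultimately show ?thesis by simp
  qed
qed

lemma strict_inc_chain:
  assumes "\<And>i. p \<le> i \<Longrightarrow> i < q \<Longrightarrow> f i < (f (Suc i) :: nat)" "p \<le> x" "x < y" "y \<le> q"
  shows "f x < f y"
  using assms(3,4)
proof (induction y)
  case 0 then show ?case by simp
next
  case (Suc y)
  show ?case
  proof (cases "x = y")
    case True thus ?thesis using assms(1,2) Suc by auto
  next
    case False
    hence "f x < f y" using Suc by auto
    moreover have "f y < f (Suc y)" using assms(1,2) Suc False by auto
    ultimately show ?thesis by simp
  qed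
qed

locale slp =
  fixes n :: nat and D :: "nat set" and v a b :: nat
  assumes Dsub: "D \<subseteq> {1..<n}" and val: "is_valley n D v" and slo: "is_slope n D v a b"
begin

lemma sc: "slope_cand n D v a b"
  using slo unfolding is_slope_def by blast

lemma basic: "1 \<le> a" "a \<le> v" "v \<le> b" "b \<le> n" "v \<notin> D" "0 \<notin> D" "n \<notin> D" "1 \<le> v" "v \<le> n"
proof -
  show "1 \<le> a" "a \<le> v" "v \<le> b" "b \<le> n" using sc unfolding slope_cand_def by auto
  thus "1 \<le> v" "v \<le> n" by auto
  show "v \<notin> D" using val unfolding is_valley_def by auto
  show "0 \<notin> D" "n \<notin> D" using Dsub by auto
qed

lemma vm1: "2 \<le> v \<Longrightarrow> v - 1 \<in> D"
  using val unfolding is_valley_def by auto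

lemma noPV: "j \<in> {a..b} \<Longrightarrow> j \<noteq> v \<Longrightarrow> \<not> is_peak n D j \<and> \<not> is_valley n D j"
  using sc unfolding slope_cand_def by auto

lemma F1: assumes "a \<le> i" "i < v" shows "i \<in> D"
proof -
  have "i \<le> v - 1" using assms by auto
  then show ?thesis
  proof (induction rule: inc_induct)
    case base
    show ?case using vm1 assms basic by auto
  next
    case (step m)
    have "Suc m \<in> {a..b}" "Suc m \<noteq> v" using step assms basic by auto
    hence "\<not> is_peak n D (Suc m)" using noPV by blast
    thus ?case using step basic unfolding is_peak_def by auto
  qed
qed

lemma F2: assumes "v \<le> i" "i < b" shows "i \<notin> D"
  using assms(1) assms(2)
proof (induction rule: dec_induct)
  case base
  show ?case using basic by auto
next
  case (step m)
  have "Suc m \<in> {a..b}" "Suc m \<noteq> v" using step assms basic by auto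
  hence "\<not> is_peak n D (Suc m)" using noPV by blast
  thus ?case using step basic unfolding is_peak_def by auto
qed

lemma F3: assumes "2 \<le> a" shows "a - 1 \<in> D"
proof (cases "a < v")
  case True
  hence "a \<in> D" using F1 by auto
  moreover have "\<not> is_peak n D a" using noPV[of a] True basic by auto
  ultimately show ?thesis using basic unfolding is_peak_def by auto
next
  case False
  hence "a = v" using basic by auto
  thus ?thesis using vm1 assms by auto
qed

lemma F7a: assumes "2 \<le> v" shows "2 \<le> a"
proof (rule ccontr)
  assume "\<not> 2 \<le> a"
  hence "a = 1" using basic by auto
  hence "1 \<in> D" using F1[of 1] assms by auto
  moreover have "\<not> is_peak n D 1" using noPV[of 1] \<open>a = 1\<close> basic assms by auto
  ultimately show False using basic unfolding is_peak_def by auto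
qed

lemma F5: assumes "b < n" shows "b \<notin> D"
proof (cases "b = v")
  case True thus ?thesis using basic by auto
next
  case False
  hence "b - 1 \<notin> D" using F2[of "b - 1"] basic by auto
  moreover have "\<not> is_peak n D b" using noPV[of b] False basic by auto
  ultimately show ?thesis using basic assms False unfolding is_peak_def by auto
qed

lemma F7b: assumes "v < n" shows "b < n"
proof (rule ccontr)
  assume "\<not> b < n"
  hence "b = n" using basic by auto
  hence "n - 1 \<notin> D" using F2[of "n - 1"] assms by auto
  moreover have "\<not> is_peak n D n" using noPV[of n] \<open>b = n\<close> basic assms by auto
  ultimately show False using basic assms unfolding is_peak_def by auto
qed

lemma maxi: assumes "slope_cand n D v a' b'" shows "{a'..b'} \<subseteq> {a..b}"
  using slo assms unfolding is_slope_def by blast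

lemma F4: assumes "3 \<le> a" shows "a - 2 \<notin> D"
proof -
  have pv: "is_peak n D (a - 1) \<or> is_valley n D (a - 1)"
  proof (rule ccontr)
    assume npv: "\<not> (is_peak n D (a - 1) \<or> is_valley n D (a - 1))"
    have "slope_cand n D v (a - 1) b"
      unfolding slope_cand_def
    proof (intro conjI ballI impI)
      fix j assume j: "j \<in> {a - 1..b}" "is_peak n D j \<or> is_valley n D j"
      show "j = v"
      proof (cases "j = a - 1")
        case True thus ?thesis using npv j by auto
      next
        case False hence "j \<in> {a..b}" using j by auto
        thus ?thesis using j(2) noPV[of j] by blast
      qed
    qed (use basic assms in auto)
    from maxi[OF this] have "a - 1 \<in> {a..b}" using assms basic by auto
    thus False using assms by auto
  qed
  have "a - 1 \<in> D" using F3 assms by auto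
  hence "is_peak n D (a - 1)" using pv unfolding is_valley_def by auto
  thus ?thesis unfolding is_peak_def using assms by (simp add: numeral_2_eq_2 numeral_3_eq_3)
qed

lemma F6: assumes "Suc b < n" shows "Suc b \<in> D"
proof -
  have pv: "is_peak n D (Suc b) \<or> is_valley n D (Suc b)"
  proof (rule ccontr)
    assume npv: "\<not> (is_peak n D (Suc b) \<or> is_valley n D (Suc b))"
    have "slope_cand n D v a (Suc b)"
      unfolding slope_cand_def
    proof (intro conjI ballI impI)
      fix j assume j: "j \<in> {a..Suc b}" "is_peak n D j \<or> is_valley n D j"
      show "j = v"
      proof (cases "j = Suc b")
        case True thus ?thesis using npv j by auto
      next
        case False hence "j \<in> {a..b}" using j by auto
        thus ?thesis using j(2) noPV[of j] by blast
      qed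
    qed (use basic assms in auto)
    from maxi[OF this] have "Suc b \<in> {a..b}" using assms basic by auto
    thus False by auto
  qed
  have "b \<notin> D" using F5 assms by auto
  hence "\<not> is_valley n D (Suc b)" unfolding is_valley_def using basic by auto
  hence "is_peak n D (Suc b)" using pv by auto
  thus ?thesis unfolding is_peak_def using assms by auto
qed

end



context slp begin

definition Bp :: "(nat \<Rightarrow> nat) set" where
  "Bp = {\<rho>. \<rho> permutes {1..n} \<and> (\<forall>i. 1 \<le> i \<and> i < n \<and> Suc i \<noteq> v \<and> i \<noteq> v \<longrightarrow> (\<rho> (Suc i) < \<rho> i \<longleftrightarrow> i \<in> D))}"

lemma S_iff: "\<sigma> \<in> perms_with_des n D \<longleftrightarrow> \<sigma> permutes {1..n} \<and> (\<forall>i. 1 \<le> i \<and> i < n \<longrightarrow> (\<sigma> (Suc i) < \<sigma> i \<longleftrightarrow> i \<in> D))"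
proof -
  have "des n \<sigma> = D \<longleftrightarrow> (\<forall>i. 1 \<le> i \<and> i < n \<longrightarrow> (\<sigma> (Suc i) < \<sigma> i \<longleftrightarrow> i \<in> D))"
    unfolding des_def set_eq_iff using Dsub by auto
  thus ?thesis unfolding perms_with_des_def by auto
qed

lemma pat: "\<sigma> \<in> perms_with_des n D \<Longrightarrow> 1 \<le> i \<Longrightarrow> i < n \<Longrightarrow> (\<sigma> (Suc i) < \<sigma> i \<longleftrightarrow> i \<in> D)"
  using S_iff by auto

lemma Sperm: "\<sigma> \<in> perms_with_des n D \<Longrightarrow> \<sigma> permutes {1..n}"
  using S_iff by auto

lemma Sinj: "\<sigma> \<in> perms_with_des n D \<Longrightarrow> \<sigma> x = \<sigma> y \<Longrightarrow> x = y"
  using Sperm permutes_inj by (metis injD)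

lemma asc: "\<sigma> \<in> perms_with_des n D \<Longrightarrow> 1 \<le> i \<Longrightarrow> i < n \<Longrightarrow> i \<notin> D \<Longrightarrow> \<sigma> i < \<sigma> (Suc i)"
  using pat[of \<sigma> i] Sinj[of \<sigma> i "Suc i"] by (metis linorder_neqE_nat n_not_Suc_n)

lemma desc: "\<sigma> \<in> perms_with_des n D \<Longrightarrow> 1 \<le> i \<Longrightarrow> i < n \<Longrightarrow> i \<in> D \<Longrightarrow> \<sigma> (Suc i) < \<sigma> i"
  using pat[of \<sigma> i] by auto

lemma decS: assumes "\<sigma> \<in> perms_with_des n D" "a \<le> x" "x < y" "y \<le> v" shows "\<sigma> y < \<sigma> x"
proof -
  have step: "\<sigma> (Suc i) < \<sigma> i" if "a \<le> i" "i < v" for i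
    using that desc[OF assms(1)] F1 basic by auto
  show ?thesis by (rule strict_dec_chain[of a v \<sigma> x y, OF step assms(2,3,4)])
qed

lemma incS: assumes "\<sigma> \<in> perms_with_des n D" "v \<le> x" "x < y" "y \<le> b" shows "\<sigma> x < \<sigma> y"
proof -
  have step: "\<sigma> i < \<sigma> (Suc i)" if "v \<le> i" "i < b" for i
    using that asc[OF assms(1)] F2 basic by auto
  show ?thesis by (rule strict_inc_chain[of v b \<sigma> x y, OF step assms(2,3,4)])
qed

lemma L1:
  assumes \<sigma>: "\<sigma> \<in> perms_with_des n D" and j: "j \<in> {a..b}"
  shows "\<sigma> \<circ> rot v j \<in> Bp"
proof -
  have perm: "\<sigma> permutes {1..n}" using Sperm[OF \<sigma>] .
  have "rot v j permutes {1..n}" using j basic by (intro rot_permutes) auto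
  hence p2: "\<sigma> \<circ> rot v j permutes {1..n}" using perm permutes_compose by blast
  have pt: "(\<sigma> (rot v j (Suc i)) < \<sigma> (rot v j i) \<longleftrightarrow> i \<in> D)"
    if i: "1 \<le> i" "i < n" "Suc i \<noteq> v" "i \<noteq> v" for i
  proof (cases "j < v")
    case jl: True
    consider "Suc i < j" | "Suc i = j" | "j \<le> i \<and> i < v" | "v < i" using i by linarith
    thus ?thesis
    proof cases
      case 1
      have "rot v j i = i" "rot v j (Suc i) = Suc i" using 1 jl i unfolding rot_def by auto
      thus ?thesis using pat[OF \<sigma> i(1,2)] by simp
    next
      case 2
      have r: "rot v j i = i" "rot v j (Suc i) = Suc (Suc i)" using 2 jl i unfolding rot_def by auto
      have iD: "i \<in> D"
      proof (cases "a \<le> i")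
        case True thus ?thesis using F1 2 jl by auto
      next
        case False hence "a = Suc i" using 2 j by auto
        moreover have "2 \<le> a" using i \<open>a = Suc i\<close> by auto
        ultimately show ?thesis using F3 by auto
      qed
      have "Suc i \<in> D" using F1 2 j jl by auto
      hence "\<sigma> (Suc (Suc i)) < \<sigma> (Suc i)" using desc[OF \<sigma>, of "Suc i"] 2 jl basic by auto
      moreover have "\<sigma> (Suc i) < \<sigma> i" using desc[OF \<sigma> i(1,2) iD] .
      ultimately show ?thesis using r iD by simp
    next
      case 3
      hence si: "Suc i < v" using i by auto
      have r: "rot v j i = Suc i" "rot v j (Suc i) = Suc (Suc i)" using 3 si unfolding rot_def by auto
      have "i \<in> D" "Suc i \<in> D" using F1 3 j si by auto
      then have "\<sigma> (Suc (Suc i)) < \<sigma> (Suc i)" using desc[OF \<sigma>, of "Suc i"] si basic by auto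
      thus ?thesis using r \<open>i \<in> D\<close> by simp
    next
      case 4
      have "rot v j i = i" "rot v j (Suc i) = Suc i" using 4 jl unfolding rot_def by auto
      thus ?thesis using pat[OF \<sigma> i(1,2)] by simp
    qed
  next
    case False
    show ?thesis
    proof (cases "j = v")
      case True thus ?thesis using pat[OF \<sigma> i(1,2)] by simp
    next
      case jr: False
      hence jr: "v < j" using \<open>\<not> j < v\<close> by auto
      consider "Suc i < v" | "v < i \<and> Suc i \<le> j" | "i = j" | "j < i" using i by linarith
      thus ?thesis
      proof cases
        case 1 have "rot v j i = i" "rot v j (Suc i) = Suc i" using 1 jr unfolding rot_def by auto
        thus ?thesis using pat[OF \<sigma> i(1,2)] by simp
      next
        case 2
        have r: "rot v j i = i - 1" "rot v j (Suc i) = i" using 2 unfolding rot_def by auto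
        have "v \<le> i - 1" "i - 1 < b" using 2 j by auto
        hence "i - 1 \<notin> D" using F2[of "i - 1"] by auto
        moreover have "Suc (i - 1) = i" using 2 by auto
        moreover have "1 \<le> i - 1" "i - 1 < n" using 2 i basic by auto
        ultimately have "\<not> \<sigma> i < \<sigma> (i - 1)" using pat[OF \<sigma>, of "i - 1"] by auto
        moreover have "i \<notin> D" using F2[of i] 2 j by auto
        ultimately show ?thesis using r by simp
      next
        case 3
        have r: "rot v j i = j - 1" "rot v j (Suc i) = Suc j" using 3 jr unfolding rot_def by auto
        have jD: "j \<notin> D" using F2[of j] F5 jr j 3 i by (cases "j < b") auto
        have "v \<le> j - 1" "j - 1 < b" using jr j by auto
        hence "j - 1 \<notin> D" using F2[of "j - 1"] by auto
        moreover have "Suc (j - 1) = j" using jr by auto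
        moreover have "1 \<le> j - 1" "j - 1 < n" using jr j i 3 basic by auto
        ultimately have a1: "\<not> \<sigma> j < \<sigma> (j - 1)" using pat[OF \<sigma>, of "j - 1"] by auto
        have a2: "\<not> \<sigma> (Suc j) < \<sigma> j" using pat[OF \<sigma>, of j] jD 3 i jr basic by auto
        show ?thesis using r jD a1 a2 3 by auto
      next
        case 4
        have "rot v j i = i" "rot v j (Suc i) = Suc i" using 4 jr unfolding rot_def by auto
        thus ?thesis using pat[OF \<sigma> i(1,2)] by simp
      qed
    qed
  qed
  show ?thesis unfolding Bp_def using p2 pt by auto
qed

lemma cls_left:
  assumes \<sigma>: "\<sigma> \<in> perms_with_des n D" and j: "a \<le> j" "j < v"
  shows "\<sigma> (rot v j (v - 1)) < \<sigma> (rot v j v) \<and> (v < n \<longrightarrow> \<sigma> (rot v j (v - 1)) < \<sigma> (rot v j (Suc v)))"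
proof -
  have r: "rot v j (v - 1) = v" "rot v j v = j" "rot v j (Suc v) = Suc v" using j unfolding rot_def by auto
  have "\<sigma> v < \<sigma> j" using decS[OF \<sigma> j(1) j(2)] by auto
  moreover have "v < n \<longrightarrow> \<sigma> v < \<sigma> (Suc v)" using asc[OF \<sigma>, of v] basic by auto
  ultimately show ?thesis using r by simp
qed

lemma cls_center:
  assumes \<sigma>: "\<sigma> \<in> perms_with_des n D"
  shows "(2 \<le> v \<longrightarrow> \<sigma> v < \<sigma> (v - 1)) \<and> (v < n \<longrightarrow> \<sigma> v < \<sigma> (Suc v))"
proof -
  have "2 \<le> v \<longrightarrow> \<sigma> (Suc (v - 1)) < \<sigma> (v - 1)" using desc[OF \<sigma>, of "v - 1"] vm1 basic by auto
  moreover have "2 \<le> v \<longrightarrow> Suc (v - 1) = v" by auto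
  moreover have "v < n \<longrightarrow> \<sigma> v < \<sigma> (Suc v)" using asc[OF \<sigma>, of v] basic by auto
  ultimately show ?thesis by auto
qed

lemma cls_right:
  assumes \<sigma>: "\<sigma> \<in> perms_with_des n D" and j: "v < j" "j \<le> b"
  shows "\<sigma> (rot v j (Suc v)) < \<sigma> (rot v j v) \<and> (2 \<le> v \<longrightarrow> \<sigma> (rot v j (Suc v)) < \<sigma> (rot v j (v - 1)))"
proof -
  have r: "rot v j (v - 1) = v - 1" "rot v j v = j" "rot v j (Suc v) = v" using j basic unfolding rot_def by auto
  have "\<sigma> v < \<sigma> j" using incS[OF \<sigma> _ j(1) j(2)] by auto
  moreover have "2 \<le> v \<longrightarrow> \<sigma> (Suc (v - 1)) < \<sigma> (v - 1)" using desc[OF \<sigma>, of "v - 1"] vm1 basic by auto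
  moreover have "2 \<le> v \<longrightarrow> Suc (v - 1) = v" by auto
  ultimately show ?thesis using r by auto
qed

lemma L2a:
  assumes \<sigma>: "\<sigma> \<in> perms_with_des n D" and \<sigma>': "\<sigma>' \<in> perms_with_des n D"
    and jj: "a \<le> j" "j < j'" "j' \<le> b" and eq: "\<sigma> \<circ> rot v j = \<sigma>' \<circ> rot v j'"
  shows False
proof -
  have e: "\<sigma> (rot v j x) = \<sigma>' (rot v j' x)" for x using eq by (metis comp_apply)
  consider "j' < v" | "j < v \<and> j' = v" | "j < v \<and> v < j'" | "j = v \<and> v < j'" | "v < j"
    using jj by linarith
  thus False
  proof cases
    case 1
    have "rot v j j = Suc j" "rot v j' j = j" "rot v j v = j" "rot v j' v = j'"
      using 1 jj unfolding rot_def by auto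
    hence x: "\<sigma> (Suc j) = \<sigma>' j" "\<sigma> j = \<sigma>' j'" using e[of j] e[of v] by auto
    have "\<sigma>' j' < \<sigma>' j" using decS[OF \<sigma>' jj(1) jj(2)] 1 by auto
    moreover have "\<sigma> (Suc j) < \<sigma> j" using desc[OF \<sigma>, of j] F1[of j] jj 1 basic by auto
    ultimately show False using x by auto
  next
    case 2
    have "v < n \<longrightarrow> True" by simp
    from cls_left[OF \<sigma> jj(1)] 2 have "\<sigma> (rot v j (v - 1)) < \<sigma> (rot v j v)" by auto
    moreover have "2 \<le> v" using 2 jj basic by auto
    hence "\<sigma>' v < \<sigma>' (v - 1)" using cls_center[OF \<sigma>'] by auto
    moreover have "rot v j' = id" using 2 by simp
    ultimately show False using e[of "v - 1"] e[of v] by auto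
  next
    case 3
    have "v < n" using 3 jj basic by auto
    from cls_left[OF \<sigma> jj(1)] 3 \<open>v < n\<close> have "\<sigma> (rot v j (v - 1)) < \<sigma> (rot v j (Suc v))" by auto
    moreover have "2 \<le> v" using 3 jj basic by auto
    hence "\<sigma>' (rot v j' (Suc v)) < \<sigma>' (rot v j' (v - 1))" using cls_right[OF \<sigma>' _ jj(3)] 3 by auto
    ultimately show False using e[of "v - 1"] e[of "Suc v"] by auto
  next
    case 4
    have "v < n" using 4 jj basic by auto
    hence "\<sigma> v < \<sigma> (Suc v)" using cls_center[OF \<sigma>] by auto
    moreover have "\<sigma>' (rot v j' (Suc v)) < \<sigma>' (rot v j' v)" using cls_right[OF \<sigma>' _ jj(3)] 4 by auto
    moreover have "rot v j = id" using 4 by simp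
    ultimately show False using e[of v] e[of "Suc v"] by auto
  next
    case 5
    have "rot v j j' = j'" "rot v j' j' = j' - 1" "rot v j v = j" "rot v j' v = j'"
      using 5 jj unfolding rot_def by auto
    hence x: "\<sigma> j' = \<sigma>' (j' - 1)" "\<sigma> j = \<sigma>' j'" using e[of j'] e[of v] by auto
    have "\<sigma> j < \<sigma> j'" using incS[OF \<sigma> _ jj(2) jj(3)] 5 by auto
    moreover have "\<sigma>' (j' - 1) < \<sigma>' (Suc (j' - 1))" using asc[OF \<sigma>', of "j' - 1"] F2[of "j' - 1"] 5 jj basic by auto
    moreover have "Suc (j' - 1) = j'" using 5 jj by auto
    ultimately show False using x by auto
  qed
qed

lemma L2:
  assumes "\<sigma> \<in> perms_with_des n D" "\<sigma>' \<in> perms_with_des n D" "j \<in> {a..b}" "j' \<in> {a..b}"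
    "\<sigma> \<circ> rot v j = \<sigma>' \<circ> rot v j'"
  shows "j = j' \<and> \<sigma> = \<sigma>'"
proof -
  have "j = j'"
  proof (rule ccontr)
    assume "j \<noteq> j'"
    hence "j < j' \<or> j' < j" by auto
    thus False
    proof
      assume "j < j'" thus False using L2a[OF assms(1,2), of j j'] assms(3,4,5) by auto
    next
      assume "j' < j" thus False using L2a[OF assms(2,1), of j' j] assms(3,4,5) by auto
    qed
  qed
  moreover have "\<sigma> = \<sigma>'"
  proof
    fix x
    have "(\<sigma> \<circ> rot v j) (irot v j x) = (\<sigma>' \<circ> rot v j') (irot v j x)" using assms(5) by simp
    thus "\<sigma> x = \<sigma>' x" using \<open>j = j'\<close> by simp
  qed
  ultimately show ?thesis by simp
qed

end



lemma rot1_mono: "2 \<le> x \<Longrightarrow> 2 \<le> y \<Longrightarrow> (rot 1 w x < rot 1 w y \<longleftrightarrow> x < y)"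
  unfolding rot_def by auto

lemma irot1_mono: "1 \<le> x \<Longrightarrow> 1 \<le> y \<Longrightarrow> x \<noteq> w \<Longrightarrow> y \<noteq> w \<Longrightarrow> (irot 1 w x < irot 1 w y \<longleftrightarrow> x < y)"
  unfolding irot_def by auto

context slp begin

lemma Bperm: "\<rho> \<in> Bp \<Longrightarrow> \<rho> permutes {1..n}"
  unfolding Bp_def by auto

lemma pB: "\<rho> \<in> Bp \<Longrightarrow> 1 \<le> i \<Longrightarrow> i < n \<Longrightarrow> Suc i \<noteq> v \<Longrightarrow> i \<noteq> v \<Longrightarrow> (\<rho> (Suc i) < \<rho> i \<longleftrightarrow> i \<in> D)"
  unfolding Bp_def by auto

lemma Binj: "\<rho> \<in> Bp \<Longrightarrow> \<rho> x = \<rho> y \<Longrightarrow> x = y"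
  using Bperm permutes_inj by (metis injD)

lemma Sc: "\<sigma> permutes {1..n} \<Longrightarrow> (\<And>i. 1 \<le> i \<Longrightarrow> i < n \<Longrightarrow> (\<sigma> (Suc i) < \<sigma> i \<longleftrightarrow> i \<in> D)) \<Longrightarrow> \<sigma> \<in> perms_with_des n D"
  using S_iff by auto

lemma L3:
  assumes \<rho>: "\<rho> \<in> Bp"
  shows "\<exists>j \<in> {a - 1..Suc b}. \<rho> \<circ> irot v j \<in> perms_with_des n D"
proof -
  define w where "w = \<rho> v"
  have perm: "\<rho> permutes {1..n}" using Bperm[OF \<rho>] .
  have n1: "\<rho> (v - 1) \<noteq> w" if "2 \<le> v" using Binj[OF \<rho>, of "v - 1" v] that unfolding w_def by auto
  have n2: "\<rho> (Suc v) \<noteq> w" using Binj[OF \<rho>, of "Suc v" v] unfolding w_def by auto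
  have n3: "\<rho> (v - 1) \<noteq> \<rho> (Suc v)" if "2 \<le> v" using Binj[OF \<rho>, of "v - 1" "Suc v"] that by auto
  show ?thesis
  proof (cases "(2 \<le> v \<longrightarrow> w < \<rho> (v - 1)) \<and> (v < n \<longrightarrow> w < \<rho> (Suc v))")
    case C: True
    have "\<rho> \<in> perms_with_des n D"
    proof (rule Sc[OF perm])
      fix i assume i: "1 \<le> i" "i < n"
      consider "Suc i = v" | "i = v" | "Suc i \<noteq> v \<and> i \<noteq> v" by auto
      thus "\<rho> (Suc i) < \<rho> i \<longleftrightarrow> i \<in> D"
      proof cases
        case 1
        hence "2 \<le> v" "i = v - 1" using i by auto
        thus ?thesis using C vm1 1 unfolding w_def by auto
      next
        case 2 thus ?thesis using C basic i unfolding w_def by auto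
      next
        case 3 thus ?thesis using pB[OF \<rho> i] by auto
      qed
    qed
    moreover have "v \<in> {a - 1..Suc b}" using basic by auto
    ultimately show ?thesis by (intro bexI[of _ v]) auto
  next
    case False
    have "(2 \<le> v \<and> \<rho> (v - 1) < w \<and> (v < n \<longrightarrow> \<rho> (v - 1) < \<rho> (Suc v))) \<or>
          (v < n \<and> \<rho> (Suc v) < w \<and> (2 \<le> v \<longrightarrow> \<rho> (Suc v) < \<rho> (v - 1)))"
    proof (cases "2 \<le> v")
      case True note v2 = this
      show ?thesis
      proof (cases "v < n")
        case True thus ?thesis using False v2 n1[OF v2] n2 n3[OF v2] by auto
      next
        case False thus ?thesis using \<open>\<not> ((2 \<le> v \<longrightarrow> w < \<rho> (v - 1)) \<and> (v < n \<longrightarrow> w < \<rho> (Suc v)))\<close> v2 n1[OF v2] by auto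
      qed
    next
      case False thus ?thesis using \<open>\<not> ((2 \<le> v \<longrightarrow> w < \<rho> (v - 1)) \<and> (v < n \<longrightarrow> w < \<rho> (Suc v)))\<close> n2 by auto
    qed
    thus ?thesis
    proof
      assume L: "2 \<le> v \<and> \<rho> (v - 1) < w \<and> (v < n \<longrightarrow> \<rho> (v - 1) < \<rho> (Suc v))"
      have a2: "2 \<le> a" using F7a L by auto
      obtain j where j: "a - 1 \<le> j" "j \<le> v - 1" "\<rho> j < w" "a - 1 < j \<longrightarrow> \<not> \<rho> (j - 1) < w"
        using exists_first[of "\<lambda>i. \<rho> i < w" "v - 1" "a - 1", OF _ diff_le_mono[OF basic(2)]] L by blast
      have j1: "1 \<le> j" "j < v" using j a2 L by auto
      have jD: "j \<in> D"
      proof (cases "a \<le> j")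
        case True thus ?thesis using F1 j1 by auto
      next
        case False hence "j = a - 1" using j by auto
        thus ?thesis using F3 a2 by auto
      qed
      have "irot v j permutes {1..n}" using j1 basic by (intro irot_permutes) auto
      hence p2: "\<rho> \<circ> irot v j permutes {1..n}" using perm permutes_compose by blast
      have "\<rho> \<circ> irot v j \<in> perms_with_des n D"
      proof (rule Sc[OF p2])
        fix i assume i: "1 \<le> i" "i < n"
        consider "Suc i < j" | "Suc i = j" | "i = j" | "j < i \<and> i < v" | "i = v" | "v < i" by linarith
        thus "(\<rho> \<circ> irot v j) (Suc i) < (\<rho> \<circ> irot v j) i \<longleftrightarrow> i \<in> D"
        proof cases
          case 1
          have "irot v j i = i" "irot v j (Suc i) = Suc i" using 1 j1 unfolding irot_def by auto
          thus ?thesis using pB[OF \<rho> i] 1 j1 by auto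
        next
          case 2
          have r: "irot v j i = i" "irot v j (Suc i) = v" using 2 j1 unfolding irot_def by auto
          show ?thesis
          proof (cases "j = a - 1")
            case True
            hence "a - 2 = i" "3 \<le> a" using 2 i a2 by auto
            hence iD: "i \<notin> D" using F4 by auto
            hence "\<not> \<rho> (Suc i) < \<rho> i" using pB[OF \<rho> i] 2 j1 by auto
            thus ?thesis using r iD j(3) 2 unfolding w_def by auto
          next
            case False
            hence "\<not> \<rho> i < w" using j 2 by auto
            moreover have "\<rho> i \<noteq> w" using Binj[OF \<rho>, of i v] 2 j1 unfolding w_def by auto
            moreover have "i \<in> D"
            proof (cases "a \<le> i")
              case True thus ?thesis using F1 2 j1 by auto
            next
              case False hence "i = a - 1" using j 2 \<open>j \<noteq> a - 1\<close> by auto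
              thus ?thesis using F3 a2 by auto
            qed
            ultimately show ?thesis using r unfolding w_def by auto
          qed
        next
          case 3
          have r: "irot v j i = v" "irot v j (Suc i) = j" using 3 j1 unfolding irot_def by auto
          thus ?thesis using 3 jD j(3) unfolding w_def by auto
        next
          case 4
          have r: "irot v j i = i - 1" "irot v j (Suc i) = i" using 4 j1 unfolding irot_def by auto
          have iD: "i \<in> D" using F1 4 j by auto
          have im: "1 \<le> i - 1" "i - 1 < n" "Suc (i - 1) \<noteq> v" "i - 1 \<noteq> v" "Suc (i - 1) = i" using 4 j1 i by auto
          have "i - 1 \<in> D"
          proof (cases "a \<le> i - 1")
            case True thus ?thesis using F1 4 by auto
          next
            case False hence "i - 1 = a - 1" using j 4 by auto
            thus ?thesis using F3 a2 by auto
          qed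
          hence "\<rho> i < \<rho> (i - 1)" using pB[OF \<rho> im(1-4)] im(5) by auto
          thus ?thesis using r iD by auto
        next
          case 5
          have r: "irot v j i = v - 1" "irot v j (Suc i) = Suc v" using 5 j1 unfolding irot_def by auto
          thus ?thesis using 5 L i basic by auto
        next
          case 6
          have "irot v j i = i" "irot v j (Suc i) = Suc i" using 6 j1 unfolding irot_def by auto
          thus ?thesis using pB[OF \<rho> i] 6 by auto
        qed
      qed
      moreover have "j \<in> {a - 1..Suc b}" using j basic by auto
      ultimately show ?thesis by blast
    next
      assume R: "v < n \<and> \<rho> (Suc v) < w \<and> (2 \<le> v \<longrightarrow> \<rho> (Suc v) < \<rho> (v - 1))"
      have bn: "b < n" using F7b R by auto
      obtain j where j: "Suc v \<le> j" "j \<le> Suc b" "\<rho> j < w" "j < Suc b \<longrightarrow> \<not> \<rho> (Suc j) < w"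
        using exists_last[of "\<lambda>i. \<rho> i < w" "Suc v" "Suc b", OF _ Suc_le_mono[THEN iffD2, OF basic(3)]] R by blast
      have j1: "v < j" "j \<le> n" using j bn by auto
      have "irot v j permutes {1..n}" using j1 basic by (intro irot_permutes) auto
      hence p2: "\<rho> \<circ> irot v j permutes {1..n}" using perm permutes_compose by blast
      have "\<rho> \<circ> irot v j \<in> perms_with_des n D"
      proof (rule Sc[OF p2])
        fix i assume i: "1 \<le> i" "i < n"
        consider "Suc i < v" | "Suc i = v" | "v \<le> i \<and> Suc i < j" | "Suc i = j" | "i = j" | "j < i"
          using j1 by linarith
        thus "(\<rho> \<circ> irot v j) (Suc i) < (\<rho> \<circ> irot v j) i \<longleftrightarrow> i \<in> D"
        proof cases
          case 1
          have "irot v j i = i" "irot v j (Suc i) = Suc i" using 1 j1 unfolding irot_def by auto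
          thus ?thesis using pB[OF \<rho> i] 1 by auto
        next
          case 2
          have r: "irot v j i = i" "irot v j (Suc i) = Suc v" using 2 j1 unfolding irot_def by auto
          have "2 \<le> v" "i = v - 1" using 2 i by auto
          thus ?thesis using r R vm1 by auto
        next
          case 3
          have r: "irot v j i = Suc i" "irot v j (Suc i) = Suc (Suc i)" using 3 j1 unfolding irot_def by auto
          have "i < b" using 3 j by auto
          hence iD: "i \<notin> D" using F2 3 by auto
          have "Suc i \<notin> D"
          proof (cases "Suc i < b")
            case True thus ?thesis using F2 3 by auto
          next
            case False hence "Suc i = b" using 3 j by auto
            thus ?thesis using F5 bn by auto
          qed
          moreover have "1 \<le> Suc i" "Suc i < n" "Suc (Suc i) \<noteq> v" "Suc i \<noteq> v" using 3 j bn by auto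
          ultimately have "\<not> \<rho> (Suc (Suc i)) < \<rho> (Suc i)" using pB[OF \<rho>, of "Suc i"] by auto
          thus ?thesis using r iD by auto
        next
          case 4
          have r: "irot v j i = j" "irot v j (Suc i) = v" using 4 j1 unfolding irot_def by auto
          have "i \<notin> D"
          proof (cases "i < b")
            case True thus ?thesis using F2 4 j by auto
          next
            case False hence "i = b" using 4 j by auto
            thus ?thesis using F5 bn by auto
          qed
          thus ?thesis using r j(3) unfolding w_def by auto
        next
          case 5
          have r: "irot v j i = v" "irot v j (Suc i) = Suc j" using 5 j1 unfolding irot_def by auto
          show ?thesis
          proof (cases "j = Suc b")
            case True
            hence jD: "j \<in> D" using F6 5 i by auto
            have "\<rho> (Suc j) < \<rho> j" using pB[OF \<rho>, of j] jD 5 i j1 by auto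
            thus ?thesis using r jD j(3) 5 unfolding w_def by auto
          next
            case False
            have "j \<notin> D"
            proof (cases "j < b")
              case True thus ?thesis using F2 j1 by auto
            next
              case False hence "j = b" using j \<open>j \<noteq> Suc b\<close> by auto
              thus ?thesis using F5 bn by auto
            qed
            thus ?thesis using r j False 5 unfolding w_def by auto
          qed
        next
          case 6
          have "irot v j i = i" "irot v j (Suc i) = Suc i" using 6 j1 unfolding irot_def by auto
          thus ?thesis using pB[OF \<rho> i] 6 j1 by auto
        qed
      qed
      moreover have "j \<in> {a - 1..Suc b}" using j basic by auto
      ultimately show ?thesis by blast
    qed
  qed
qed

end



lemma exists_perm:
  "D \<subseteq> {1..<n} \<Longrightarrow> \<exists>\<sigma>. \<sigma> permutes {1..n} \<and> (\<forall>i. 1 \<le> i \<and> i < n \<longrightarrow> (\<sigma> (Suc i) < \<sigma> i \<longleftrightarrow> i \<in> D))"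
proof (induction n arbitrary: D)
  case 0
  show ?case by (intro exI[of _ id]) (auto simp: permutes_id)
next
  case (Suc n)
  have "D - {n} \<subseteq> {1..<n}" using Suc.prems by auto
  from Suc.IH[OF this] obtain \<sigma> where \<sigma>: "\<sigma> permutes {1..n}"
    "\<And>i. 1 \<le> i \<Longrightarrow> i < n \<Longrightarrow> (\<sigma> (Suc i) < \<sigma> i \<longleftrightarrow> i \<in> D - {n})" by blast
  have ps: "\<sigma> permutes {1..Suc n}" using permutes_subset[OF \<sigma>(1)] by auto
  have img: "\<sigma> x \<in> {1..n}" if "x \<in> {1..n}" for x using permutes_in_image[OF \<sigma>(1)] that by auto
  have fix1: "\<sigma> (Suc n) = Suc n" using \<sigma>(1) unfolding permutes_def by auto
  show ?case
  proof (cases "n \<in> D")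
    case False
    show ?thesis
    proof (intro exI[of _ \<sigma>] conjI allI impI)
      show "\<sigma> permutes {1..Suc n}" by fact
      fix i assume i: "1 \<le> i \<and> i < Suc n"
      show "\<sigma> (Suc i) < \<sigma> i \<longleftrightarrow> i \<in> D"
      proof (cases "i < n")
        case True thus ?thesis using \<sigma>(2)[of i] i by auto
      next
        case False hence "i = n" using i by auto
        thus ?thesis using fix1 img[of n] i \<open>n \<notin> D\<close> by auto
      qed
    qed
  next
    case True
    have n1: "1 \<le> n" using True Suc.prems by auto
    have cp: "rot (Suc n) 1 permutes {1..Suc n}" using n1 by (intro rot_permutes) auto
    have c: "rot (Suc n) 1 x = Suc x" if "x \<in> {1..n}" for x using that unfolding rot_def by auto
    show ?thesis
    proof (intro exI[of _ "rot (Suc n) 1 \<circ> \<sigma>"] conjI allI impI)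
      show "rot (Suc n) 1 \<circ> \<sigma> permutes {1..Suc n}" using permutes_compose[OF ps cp] .
      fix i assume i: "1 \<le> i \<and> i < Suc n"
      show "(rot (Suc n) 1 \<circ> \<sigma>) (Suc i) < (rot (Suc n) 1 \<circ> \<sigma>) i \<longleftrightarrow> i \<in> D"
      proof (cases "i < n")
        case True thus ?thesis using \<sigma>(2)[of i] i c img[of i] img[of "Suc i"] by auto
      next
        case False hence "i = n" using i by auto
        moreover have "rot (Suc n) 1 (Suc n) = 1" unfolding rot_def by auto
        ultimately show ?thesis using fix1 img[of n] c[of "\<sigma> n"] n1 True by auto
      qed
    qed
  qed
qed

context slp begin

abbreviation "S \<equiv> perms_with_des n D"
abbreviation "T1 \<equiv> {\<sigma> \<in> perms_with_des n D. \<sigma> v = 1}"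

lemma finS: "finite S"
proof -
  have "S \<subseteq> {p. p permutes {1..n}}" unfolding perms_with_des_def by auto
  thus ?thesis using finite_permutations[of "{1..n}"] finite_subset by auto
qed

lemma finB: "finite Bp"
proof -
  have "Bp \<subseteq> {p. p permutes {1..n}}" unfolding Bp_def by auto
  thus ?thesis using finite_permutations[of "{1..n}"] finite_subset by auto
qed

lemma S_ne: "card S > 0"
proof -
  obtain \<sigma> where "\<sigma> permutes {1..n}" "\<forall>i. 1 \<le> i \<and> i < n \<longrightarrow> (\<sigma> (Suc i) < \<sigma> i \<longleftrightarrow> i \<in> D)"
    using exists_perm[OF Dsub] by blast
  hence "\<sigma> \<in> S" using S_iff by auto
  thus ?thesis using finS card_gt_0_iff by blast
qed

lemma relabel: "bij_betw (\<lambda>(\<sigma>, w). rot 1 w \<circ> \<sigma>) (T1 \<times> {1..n}) Bp"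
proof (rule bij_betw_byWitness[where f' = "\<lambda>\<rho>. (irot 1 (\<rho> v) \<circ> \<rho>, \<rho> v)"])
  show "\<forall>x\<in>T1 \<times> {1..n}. (\<lambda>\<rho>. (irot 1 (\<rho> v) \<circ> \<rho>, \<rho> v)) ((\<lambda>(\<sigma>, w). rot 1 w \<circ> \<sigma>) x) = x"
  proof
    fix x assume "x \<in> T1 \<times> {1..n}"
    then obtain \<sigma> w where x: "x = (\<sigma>, w)" "\<sigma> v = 1" by auto
    have "rot 1 w 1 = w" unfolding rot_def by auto
    thus "(\<lambda>\<rho>. (irot 1 (\<rho> v) \<circ> \<rho>, \<rho> v)) ((\<lambda>(\<sigma>, w). rot 1 w \<circ> \<sigma>) x) = x"
      using x by (auto simp: fun_eq_iff)
  qed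
  show "\<forall>\<rho>\<in>Bp. (\<lambda>(\<sigma>, w). rot 1 w \<circ> \<sigma>) ((\<lambda>\<rho>. (irot 1 (\<rho> v) \<circ> \<rho>, \<rho> v)) \<rho>) = \<rho>"
    by (auto simp: fun_eq_iff)
  show "(\<lambda>(\<sigma>, w). rot 1 w \<circ> \<sigma>) ` (T1 \<times> {1..n}) \<subseteq> Bp"
  proof
    fix y assume "y \<in> (\<lambda>(\<sigma>, w). rot 1 w \<circ> \<sigma>) ` (T1 \<times> {1..n})"
    then obtain \<sigma> w where y: "y = rot 1 w \<circ> \<sigma>" "\<sigma> \<in> S" "\<sigma> v = 1" "w \<in> {1..n}" by auto
    have cp: "rot 1 w permutes {1..n}" using y basic by (intro rot_permutes) auto
    have p: "y permutes {1..n}" using permutes_compose[OF Sperm[OF y(2)] cp] y by simp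
    have two: "2 \<le> \<sigma> x" if "x \<in> {1..n}" "x \<noteq> v" for x
    proof -
      have "\<sigma> x \<in> {1..n}" using permutes_in_image[OF Sperm[OF y(2)]] that by auto
      moreover have "\<sigma> x \<noteq> 1" using Sinj[OF y(2), of x v] y(3) that by auto
      ultimately show ?thesis by auto
    qed
    show "y \<in> Bp" unfolding Bp_def
    proof (intro CollectI conjI allI impI)
      show "y permutes {1..n}" by fact
      fix i assume i: "1 \<le> i \<and> i < n \<and> Suc i \<noteq> v \<and> i \<noteq> v"
      have "2 \<le> \<sigma> i" "2 \<le> \<sigma> (Suc i)" using two i by auto
      thus "y (Suc i) < y i \<longleftrightarrow> i \<in> D" using rot1_mono pat[OF y(2), of i] i y(1) by auto
    qed
  qed
  show "(\<lambda>\<rho>. (irot 1 (\<rho> v) \<circ> \<rho>, \<rho> v)) ` Bp \<subseteq> T1 \<times> {1..n}"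
  proof
    fix z assume "z \<in> (\<lambda>\<rho>. (irot 1 (\<rho> v) \<circ> \<rho>, \<rho> v)) ` Bp"
    then obtain \<rho> where z: "z = (irot 1 (\<rho> v) \<circ> \<rho>, \<rho> v)" "\<rho> \<in> Bp" by auto
    define w where "w = \<rho> v"
    have img: "\<rho> x \<in> {1..n}" if "x \<in> {1..n}" for x using permutes_in_image[OF Bperm[OF z(2)]] that by auto
    have w: "w \<in> {1..n}" using img basic unfolding w_def by auto
    have cp: "irot 1 w permutes {1..n}" using w basic by (intro irot_permutes) auto
    define \<sigma> where "\<sigma> = irot 1 w \<circ> \<rho>"
    have p: "\<sigma> permutes {1..n}" using permutes_compose[OF Bperm[OF z(2)] cp] unfolding \<sigma>_def .
    have sv: "\<sigma> v = 1" unfolding \<sigma>_def w_def irot_def by auto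
    have ne: "\<rho> x \<noteq> w" if "x \<noteq> v" for x using Binj[OF z(2), of x v] that unfolding w_def by auto
    have ge2: "2 \<le> \<sigma> x" if "x \<in> {1..n}" "x \<noteq> v" for x
      using img[OF that(1)] ne[OF that(2)] w unfolding \<sigma>_def irot_def by auto
    have "\<sigma> \<in> S"
    proof (rule Sc[OF p])
      fix i assume i: "1 \<le> i" "i < n"
      consider "Suc i = v" | "i = v" | "Suc i \<noteq> v \<and> i \<noteq> v" by auto
      thus "\<sigma> (Suc i) < \<sigma> i \<longleftrightarrow> i \<in> D"
      proof cases
        case 1
        hence "2 \<le> v" "i = v - 1" using i by auto
        thus ?thesis using ge2[of i] i 1 sv vm1 by auto
      next
        case 2 thus ?thesis using ge2[of "Suc i"] i sv basic by auto
      next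
        case 3
        have "\<sigma> (Suc i) < \<sigma> i \<longleftrightarrow> \<rho> (Suc i) < \<rho> i" unfolding \<sigma>_def
          using irot1_mono[of "\<rho> (Suc i)" "\<rho> i" w] img[of i] img[of "Suc i"] ne[of i] ne[of "Suc i"] 3 i by auto
        thus ?thesis using pB[OF z(2)] 3 i by auto
      qed
    qed
    thus "z \<in> T1 \<times> {1..n}" using z sv w unfolding \<sigma>_def w_def by auto
  qed
qed

lemma cardB: "card Bp = card T1 * n"
  using bij_betw_same_card[OF relabel] by (simp add: card_cartesian_product)

lemma lower: "card S * (b - a + 1) \<le> card Bp"
proof -
  have "inj_on (\<lambda>(\<sigma>, j). \<sigma> \<circ> rot v j) (S \<times> {a..b})"
    unfolding inj_on_def using L2 by auto
  moreover have "(\<lambda>(\<sigma>, j). \<sigma> \<circ> rot v j) ` (S \<times> {a..b}) \<subseteq> Bp" using L1 by auto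
  ultimately have "card (S \<times> {a..b}) \<le> card Bp" using card_inj_on_le finB by blast
  moreover have "Suc b - a = b - a + 1" using basic by auto
  hence "card (S \<times> {a..b}) = card S * (b - a + 1)"
    by (simp add: card_cartesian_product)
  ultimately show ?thesis by simp
qed

lemma upper: "card Bp \<le> card S * (b - a + 3)"
proof -
  have "Bp \<subseteq> (\<lambda>(\<sigma>, j). \<sigma> \<circ> rot v j) ` (S \<times> {a - 1..Suc b})"
  proof
    fix \<rho> assume "\<rho> \<in> Bp"
    then obtain j where j: "j \<in> {a - 1..Suc b}" "\<rho> \<circ> irot v j \<in> S" using L3 by blast
    have "\<rho> = (\<rho> \<circ> irot v j) \<circ> rot v j" by (auto simp: fun_eq_iff)
    thus "\<rho> \<in> (\<lambda>(\<sigma>, j). \<sigma> \<circ> rot v j) ` (S \<times> {a - 1..Suc b})" using j by force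
  qed
  hence "card Bp \<le> card ((\<lambda>(\<sigma>, j). \<sigma> \<circ> rot v j) ` (S \<times> {a - 1..Suc b}))"
    by (intro card_mono) (auto intro: finite_imageI simp: finS)
  also have "\<dots> \<le> card (S \<times> {a - 1..Suc b})" by (intro card_image_le) (simp add: finS)
  also have "\<dots> = card S * (b - a + 3)"
  proof -
    have "Suc (Suc b) - (a - 1) = b - a + 3" using basic by auto
    thus ?thesis by (simp add: card_cartesian_product)
  qed
  finally show ?thesis .
qed

lemma prob_bounds:
  "real (b - a + 1) / real n \<le> prob_one_at n D v \<and> prob_one_at n D v \<le> real (b - a + 3) / real n"
proof -
  have n0: "real n > 0" using basic by auto
  have s0: "real (card S) > 0" using S_ne by auto
  have T1eq: "{\<sigma> \<in> perms_with_des n D. \<sigma> v = 1} = T1" by simp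
  have l0: "card S * (b - a + 1) \<le> card T1 * n" using lower cardB by simp
  have l: "real (card S) * real (b - a + 1) \<le> real (card T1) * real n"
    using l0 by (simp only: of_nat_mult[symmetric] of_nat_le_iff)
  have u0: "card T1 * n \<le> card S * (b - a + 3)" using upper cardB by simp
  have u: "real (card T1) * real n \<le> real (card S) * real (b - a + 3)"
    using u0 by (simp only: of_nat_mult[symmetric] of_nat_le_iff)
  have "prob_one_at n D v = real (card T1) / real (card S)" unfolding prob_one_at_def by simp
  moreover have "real (b - a + 1) / real n \<le> real (card T1) / real (card S)"
    using l n0 s0 by (simp add: divide_le_eq le_divide_eq mult.commute)
  moreover have "real (card T1) / real (card S) \<le> real (b - a + 3) / real n"
    using u n0 s0 by (simp add: divide_le_eq le_divide_eq mult.commute)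
  ultimately show ?thesis by simp
qed

end

theorem corollary21:
  fixes \<epsilon> :: real
  assumes "\<epsilon> > 0"
  shows "\<exists>n0::nat. n0 \<ge> 1 \<and>
    (\<forall>(n::nat) (D::nat set) (v::nat) (a::nat) (b::nat).
       D \<subseteq> {1..<n} \<longrightarrow> is_valley n D v \<longrightarrow> is_slope n D v a b \<longrightarrow> b - a \<ge> n0 \<longrightarrow>
       (1 - \<epsilon>) * (real (b - a) / real n) \<le> prob_one_at n D v \<and>
       prob_one_at n D v \<le> (1 + \<epsilon>) * (real (b - a) / real n))"
proof (intro exI[of _ "nat \<lceil>3 / \<epsilon>\<rceil> + 1"] conjI allI impI)
  show "1 \<le> nat \<lceil>3 / \<epsilon>\<rceil> + 1" by simp
  fix n D v a b
  assume A: "D \<subseteq> {1..<n}" "is_valley n D v" "is_slope n D v a b" "nat \<lceil>3 / \<epsilon>\<rceil> + 1 \<le> b - a"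
  interpret slp n D v a b using A(1-3) by unfold_locales
  define s where "s = real (b - a)"
  have n0: "real n > 0" using basic by auto
  have s3: "3 / \<epsilon> \<le> s" unfolding s_def using A(4)
    by (metis (mono_tags, opaque_lifting) add_leD1 le_nat_iff of_nat_le_iff order.trans real_nat_ceiling_ge)
  hence es: "3 \<le> \<epsilon> * s" using assms by (simp add: divide_le_eq mult.commute)
  have s0: "0 \<le> s" unfolding s_def by simp
  have e1: "real (b - a + 1) = s + 1" "real (b - a + 3) = s + 3" unfolding s_def by simp_all
  have pb: "(s + 1) / real n \<le> prob_one_at n D v" "prob_one_at n D v \<le> (s + 3) / real n"
    using prob_bounds unfolding e1 by auto
  have "(1 - \<epsilon>) * (s / real n) \<le> (s + 1) / real n"
  proof -
    have "(1 - \<epsilon>) * s \<le> s + 1" using assms s0 by (simp add: algebra_simps)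
    hence "((1 - \<epsilon>) * s) / real n \<le> (s + 1) / real n" using n0 by (intro divide_right_mono) auto
    thus ?thesis by simp
  qed
  moreover have "(s + 3) / real n \<le> (1 + \<epsilon>) * (s / real n)"
  proof -
    have "s + 3 \<le> (1 + \<epsilon>) * s" using es by (simp add: algebra_simps)
    hence "(s + 3) / real n \<le> ((1 + \<epsilon>) * s) / real n" using n0 by (intro divide_right_mono) auto
    thus ?thesis by simp
  qed
  ultimately have "(1 - \<epsilon>) * (s / real n) \<le> prob_one_at n D v \<and>
       prob_one_at n D v \<le> (1 + \<epsilon>) * (s / real n)" using pb by linarith
  thus "(1 - \<epsilon>) * (real (b - a) / real n) \<le> prob_one_at n D v"
    "prob_one_at n D v \<le> (1 + \<epsilon>) * (real (b - a) / real n)"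
    by (simp_all only: s_def)
qed



end
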